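(* Let $2<p<4$, $b>0$, assume (V), fix $k\in\mathbb{N}$ and $\mathbf{r}_k\in\Lambda_k$. Let $(u_1,\dots,u_{k+1})\in\mathbf{H}_k$ satisfy, for every $i=1,\dots,k+1$, $$(4-p)\int_{B_i}|u_i|^pdx<2\|u_i\|_i^2$$ and $$\|u_i\|_i^2+b\Big(\int_{B_i}|\nabla u_i|^2dx\Big)^2+b\int_{B_i}|\nabla u_i|^2dx\sum_{j\ne i}\int_{B_j}|\nabla u_j|^2dx\le\int_{B_i}|u_i|^pdx.$$ Then there exists a unique $(k+1)$-tuple $(\widehat t_1,\dots,\widehat t_{k+1})$ of positive numbers with $\widehat t_i\le1$ for all $i$ such that $(\widehat t_1u_1,\dots,\widehat t_{k+1}u_{k+1})\in N_k^-$. Moreover, $$E_b(\widehat t_1u_1,\dots,\widehat t_{k+1}u_{k+1})=\max_{0\le t_i\le1,\ i=1,\dots,k+1}E_b(t_1u_1,\dots,t_{k+1}u_{k+1}).$$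
   Context: Condition (V): $V$ is continuous, radial, and $\inf_{\mathbb{R}^3}V=V_0>0$. $\Lambda_k:=\{(r_1,\dots,r_k):0=:r_0<r_1<\dots<r_k<r_{k+1}:=\infty\}$; $B_i:=\{r_{i-1}<|x|<r_i\}\subset\mathbb{R}^3$. $\mathcal{H}_i$ is the space of radial $H^1_0(B_i)$ functions (extended by $0$ outside $B_i$) with norm $\|u\|_i^2=\int_{B_i}(|\nabla u|^2+V(|x|)u^2)dx$; $\mathbf{H}_k:=\mathcal{H}_1\times\dots\times\mathcal{H}_{k+1}$. $E_b(u_1,\dots,u_{k+1}):=\frac12\sum_i\|u_i\|_i^2+\frac b4\big(\sum_i\int_{B_i}|\nabla u_i|^2\big)^2-\frac1p\sum_i\int_{B_i}|u_i|^p$. $N_k^-$ is the set of $(u_1,\dots,u_{k+1})\in\mathbf{H}_k$ with, for all $i$: $u_i\ne0$, $\|u_i\|_i^2+b\big(\int_{B_i}|\nabla u_i|^2\big)^2+b\int_{B_i}|\nabla u_i|^2\sum_{j\ne i}\int_{B_j}|\nabla u_j|^2=\int_{B_i}|u_i|^p$, and $(4-p)\int_{B_i}|u_i|^p<2\|u_i\|_i^2$. *)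

theory Defs
  imports "HOL-Analysis.Analysis"
begin

text \<open>Radii r_0 = 0 < r_1 < ... < r_k (and r_(k+1) = infinity implicitly).\<close>
definition Lambda :: "nat \<Rightarrow> (nat \<Rightarrow> real) \<Rightarrow> bool" where
  "Lambda k r \<longleftrightarrow> r 0 = 0 \<and> (\<forall>i<k. r i < r (Suc i))"

definition annulus :: "nat \<Rightarrow> (nat \<Rightarrow> real) \<Rightarrow> nat \<Rightarrow> (real^3) set" where
  "annulus k r i = (if i = k + 1 then {x. r (i - 1) < norm x}
                    else {x. r (i - 1) < norm x \<and> norm x < r i})"

definition test_fun :: "(real^3) set \<Rightarrow> (real^3 \<Rightarrow> real) \<Rightarrow> (real^3 \<Rightarrow> real^3) \<Rightarrow> bool" where
  "test_fun B \<phi> D \<longleftrightarrow>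
     (\<forall>x. (\<phi> has_derivative (\<lambda>h. D x \<bullet> h)) (at x)) \<and> continuous_on UNIV D \<and>
     compact (closure {x. \<phi> x \<noteq> 0}) \<and> closure {x. \<phi> x \<noteq> 0} \<subseteq> B"

text \<open>H_sp V B u G: u is a radial element of H^1_0(B) (extended by 0 outside B),
  the closure of compactly supported test functions in the norm
  (int_B |grad w|^2 + V w^2)^(1/2), and G is its (weak) gradient.\<close>
definition H_sp :: "(real^3 \<Rightarrow> real) \<Rightarrow> (real^3) set \<Rightarrow> (real^3 \<Rightarrow> real) \<Rightarrow> (real^3 \<Rightarrow> real^3) \<Rightarrow> bool" where
  "H_sp V B u G \<longleftrightarrow>
     u \<in> borel_measurable lborel \<and> G \<in> borel_measurable lborel \<and>
     (\<forall>x. x \<notin> B \<longrightarrow> u x = 0) \<and>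
     (\<forall>x y. norm x = norm y \<longrightarrow> u x = u y) \<and>
     set_integrable lborel B (\<lambda>x. (norm (G x))\<^sup>2) \<and>
     set_integrable lborel B (\<lambda>x. V x * (u x)\<^sup>2) \<and>
     (\<exists>\<phi> D. (\<forall>n. test_fun B (\<phi> n) (D n) \<and>
                 set_integrable lborel B (\<lambda>x. (norm (D n x - G x))\<^sup>2 + V x * (\<phi> n x - u x)\<^sup>2)) \<and>
             (\<lambda>n. LINT x:B|lborel. (norm (D n x - G x))\<^sup>2 + V x * (\<phi> n x - u x)\<^sup>2)
               \<longlonglongrightarrow> 0)"

definition nrm_sq :: "(real^3 \<Rightarrow> real) \<Rightarrow> (real^3) set \<Rightarrow> (real^3 \<Rightarrow> real) \<Rightarrow> (real^3 \<Rightarrow> real^3) \<Rightarrow> real" where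
  "nrm_sq V B u G = (LINT x:B|lborel. (norm (G x))\<^sup>2 + V x * (u x)\<^sup>2)"

definition grad_sq :: "(real^3) set \<Rightarrow> (real^3 \<Rightarrow> real^3) \<Rightarrow> real" where
  "grad_sq B G = (LINT x:B|lborel. (norm (G x))\<^sup>2)"

definition Lp_int :: "real \<Rightarrow> (real^3) set \<Rightarrow> (real^3 \<Rightarrow> real) \<Rightarrow> real" where
  "Lp_int p B u = (LINT x:B|lborel. \<bar>u x\<bar> powr p)"

definition H_k :: "(real^3 \<Rightarrow> real) \<Rightarrow> nat \<Rightarrow> (nat \<Rightarrow> real) \<Rightarrow>
    (nat \<Rightarrow> real^3 \<Rightarrow> real) \<Rightarrow> (nat \<Rightarrow> real^3 \<Rightarrow> real^3) \<Rightarrow> bool" where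
  "H_k V k r u G \<longleftrightarrow> (\<forall>i\<in>{1..k+1}. H_sp V (annulus k r i) (u i) (G i))"

definition E_b :: "(real^3 \<Rightarrow> real) \<Rightarrow> real \<Rightarrow> real \<Rightarrow> nat \<Rightarrow> (nat \<Rightarrow> real) \<Rightarrow>
    (nat \<Rightarrow> real^3 \<Rightarrow> real) \<Rightarrow> (nat \<Rightarrow> real^3 \<Rightarrow> real^3) \<Rightarrow> real" where
  "E_b V b p k r u G =
     1/2 * (\<Sum>i=1..k+1. nrm_sq V (annulus k r i) (u i) (G i))
     + b/4 * (\<Sum>i=1..k+1. grad_sq (annulus k r i) (G i))\<^sup>2
     - 1/p * (\<Sum>i=1..k+1. Lp_int p (annulus k r i) (u i))"

definition N_minus :: "(real^3 \<Rightarrow> real) \<Rightarrow> real \<Rightarrow> real \<Rightarrow> nat \<Rightarrow> (nat \<Rightarrow> real) \<Rightarrow>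
    (nat \<Rightarrow> real^3 \<Rightarrow> real) \<Rightarrow> (nat \<Rightarrow> real^3 \<Rightarrow> real^3) \<Rightarrow> bool" where
  "N_minus V b p k r u G \<longleftrightarrow> H_k V k r u G \<and>
     (\<forall>i\<in>{1..k+1}.
        \<not> (AE x in lborel. u i x = 0) \<and>
        nrm_sq V (annulus k r i) (u i) (G i) + b * (grad_sq (annulus k r i) (G i))\<^sup>2
          + b * grad_sq (annulus k r i) (G i) *
              (\<Sum>j\<in>{1..k+1} - {i}. grad_sq (annulus k r j) (G j))
          = Lp_int p (annulus k r i) (u i) \<and>
        (4 - p) * Lp_int p (annulus k r i) (u i) < 2 * nrm_sq V (annulus k r i) (u i) (G i))"

definition scU :: "(nat \<Rightarrow> real) \<Rightarrow> (nat \<Rightarrow> real^3 \<Rightarrow> real) \<Rightarrow> nat \<Rightarrow> real^3 \<Rightarrow> real" where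
  "scU t u = (\<lambda>i x. t i * u i x)"
definition scG :: "(nat \<Rightarrow> real) \<Rightarrow> (nat \<Rightarrow> real^3 \<Rightarrow> real^3) \<Rightarrow> nat \<Rightarrow> real^3 \<Rightarrow> real^3" where
  "scG t G = (\<lambda>i x. t i *\<^sub>R G i x)"

end

theory Submission
  imports Defs
begin


lemma nrm_sq_scale: "nrm_sq V B (\<lambda>x. t * u x) (\<lambda>x. t *\<^sub>R G x) = t\<^sup>2 * nrm_sq V B u G"
proof -
  have "\<And>x. (norm (t *\<^sub>R G x))\<^sup>2 + V x * (t * u x)\<^sup>2 = t\<^sup>2 * ((norm (G x))\<^sup>2 + V x * (u x)\<^sup>2)"
    by (simp add: power_mult_distrib algebra_simps)
  then show ?thesis unfolding nrm_sq_def by simp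
qed

lemma grad_sq_scale: "grad_sq B (\<lambda>x. t *\<^sub>R G x) = t\<^sup>2 * grad_sq B G"
proof -
  have "\<And>x. (norm (t *\<^sub>R G x))\<^sup>2 = t\<^sup>2 * (norm (G x))\<^sup>2"
    by (simp add: power_mult_distrib algebra_simps)
  then show ?thesis unfolding grad_sq_def by simp
qed

lemma Lp_scale: assumes "t \<ge> 0" shows "Lp_int p B (\<lambda>x. t * u x) = t powr p * Lp_int p B u"
proof -
  have "\<And>x. \<bar>t * u x\<bar> powr p = t powr p * \<bar>u x\<bar> powr p"
    using assms by (simp add: abs_mult powr_mult)
  then show ?thesis unfolding Lp_int_def by simp
qed

lemma grad_sq_nonneg: "grad_sq B G \<ge> 0"
  unfolding grad_sq_def set_lebesgue_integral_def
  by (rule integral_nonneg_AE) (auto simp: indicator_def)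

lemma Lp_nonneg: "Lp_int p B u \<ge> 0"
  unfolding Lp_int_def set_lebesgue_integral_def
  by (rule integral_nonneg_AE) (auto simp: indicator_def)

lemma Lp_pos_not_AE: assumes "Lp_int p B u > 0" shows "\<not> (AE x in lborel. u x = 0)"
proof
  assume h: "AE x in lborel. u x = 0"
  have "AE x in lborel. indicator B x *\<^sub>R \<bar>u x\<bar> powr p = (0::real)"
    using h by eventually_elim simp
  then have "Lp_int p B u = 0" unfolding Lp_int_def set_lebesgue_integral_def
    by (rule integral_eq_zero_AE)
  with assms show False by simp
qed

lemma H_sp_scale: assumes "t \<noteq> 0" "H_sp V B u G"
  shows "H_sp V B (\<lambda>x. t * u x) (\<lambda>x. t *\<^sub>R G x)"
proof -
  from assms(2) obtain \<phi> D where
    m: "u \<in> borel_measurable lborel" "G \<in> borel_measurable lborel"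
    and z: "\<forall>x. x \<notin> B \<longrightarrow> u x = 0" and rad: "\<forall>x y. norm x = norm y \<longrightarrow> u x = u y"
    and i1: "set_integrable lborel B (\<lambda>x. (norm (G x))\<^sup>2)"
    and i2: "set_integrable lborel B (\<lambda>x. V x * (u x)\<^sup>2)"
    and tf: "\<forall>n. test_fun B (\<phi> n) (D n) \<and>
                 set_integrable lborel B (\<lambda>x. (norm (D n x - G x))\<^sup>2 + V x * (\<phi> n x - u x)\<^sup>2)"
    and lim: "(\<lambda>n. LINT x:B|lborel. (norm (D n x - G x))\<^sup>2 + V x * (\<phi> n x - u x)\<^sup>2) \<longlonglongrightarrow> 0"
    unfolding H_sp_def by blast
  have eq1: "\<And>x. (norm (t *\<^sub>R G x))\<^sup>2 = t\<^sup>2 * (norm (G x))\<^sup>2"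
    by (simp add: power_mult_distrib algebra_simps)
  have eq2: "\<And>x. V x * (t * u x)\<^sup>2 = t\<^sup>2 * (V x * (u x)\<^sup>2)"
    by (simp add: power_mult_distrib algebra_simps)
  have eq3: "\<And>n x. (norm (t *\<^sub>R D n x - t *\<^sub>R G x))\<^sup>2 + V x * (t * \<phi> n x - t * u x)\<^sup>2
     = t\<^sup>2 * ((norm (D n x - G x))\<^sup>2 + V x * (\<phi> n x - u x)\<^sup>2)"
  proof -
    fix n x
    have e1: "t *\<^sub>R D n x - t *\<^sub>R G x = t *\<^sub>R (D n x - G x)" by (simp add: scaleR_diff_right)
    have e2: "t * \<phi> n x - t * u x = t * (\<phi> n x - u x)" by (simp add: algebra_simps)
    show "(norm (t *\<^sub>R D n x - t *\<^sub>R G x))\<^sup>2 + V x * (t * \<phi> n x - t * u x)\<^sup>2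
     = t\<^sup>2 * ((norm (D n x - G x))\<^sup>2 + V x * (\<phi> n x - u x)\<^sup>2)"
      unfolding e1 e2 norm_scaleR power_mult_distrib power2_abs by (simp add: algebra_simps)
  qed
  have tf': "test_fun B (\<lambda>x. t * \<phi> n x) (\<lambda>x. t *\<^sub>R D n x)" for n
  proof -
    from tf have T: "test_fun B (\<phi> n) (D n)" by blast
    have s: "{x. t * \<phi> n x \<noteq> 0} = {x. \<phi> n x \<noteq> 0}" using assms(1) by auto
    have "((\<lambda>x. t * \<phi> n x) has_derivative (\<lambda>h. (t *\<^sub>R D n x) \<bullet> h)) (at x)" for x
    proof -
      have "((\<lambda>x. t * \<phi> n x) has_derivative (\<lambda>h. t * (D n x \<bullet> h))) (at x)"
        using T unfolding test_fun_def by (auto intro: has_derivative_mult_right)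
      then show ?thesis by (simp add: inner_scaleR_left)
    qed
    moreover have "continuous_on UNIV (\<lambda>x. t *\<^sub>R D n x)"
      using T unfolding test_fun_def by (auto intro: continuous_intros)
    ultimately show ?thesis using T unfolding test_fun_def s by blast
  qed
  show ?thesis unfolding H_sp_def
  proof (intro conjI)
    show "(\<lambda>x. t * u x) \<in> borel_measurable lborel" using m by measurable
    show "(\<lambda>x. t *\<^sub>R G x) \<in> borel_measurable lborel" using m by measurable
    show "\<forall>x. x \<notin> B \<longrightarrow> t * u x = 0" using z by simp
    show "\<forall>x y. norm x = norm y \<longrightarrow> t * u x = t * u y" using rad by metis
    show "set_integrable lborel B (\<lambda>x. (norm (t *\<^sub>R G x))\<^sup>2)" unfolding eq1 using i1 by simp
    show "set_integrable lborel B (\<lambda>x. V x * (t * u x)\<^sup>2)" unfolding eq2 using i2 by simp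
    show "\<exists>\<phi>' D'. (\<forall>n. test_fun B (\<phi>' n) (D' n) \<and>
                 set_integrable lborel B (\<lambda>x. (norm (D' n x - t *\<^sub>R G x))\<^sup>2 + V x * (\<phi>' n x - t * u x)\<^sup>2)) \<and>
             (\<lambda>n. LINT x:B|lborel. (norm (D' n x - t *\<^sub>R G x))\<^sup>2 + V x * (\<phi>' n x - t * u x)\<^sup>2)
               \<longlonglongrightarrow> 0"
    proof (intro exI conjI allI)
      fix n
      show "test_fun B (\<lambda>x. t * \<phi> n x) (\<lambda>x. t *\<^sub>R D n x)" by (rule tf')
      show "set_integrable lborel B (\<lambda>x. (norm (t *\<^sub>R D n x - t *\<^sub>R G x))\<^sup>2 + V x * (t * \<phi> n x - t * u x)\<^sup>2)"
        unfolding eq3 using tf by simp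
    next
      show "(\<lambda>n. LINT x:B|lborel. (norm (t *\<^sub>R D n x - t *\<^sub>R G x))\<^sup>2 + V x * (t * \<phi> n x - t * u x)\<^sup>2) \<longlonglongrightarrow> 0"
        unfolding eq3 using tendsto_mult_right_zero[OF lim, of "t\<^sup>2"] by simp
    qed
  qed
qed



lemma bern:
  fixes l th :: real assumes "l > 1" "0 < th" "th < 1"
  shows "l \<le> th * l powr th + (1 - th) * l powr (th + 1)"
proof -
  have "(l powr (th - 1)) powr th * (l powr th) powr (1 - th) \<le> th * l powr (th - 1) + (1 - th) * l powr th"
    using assms by (intro Youngs_inequality_0) auto
  moreover have "(l powr (th - 1)) powr th * (l powr th) powr (1 - th) = 1"
    using assms by (simp add: powr_powr flip: powr_add) (simp add: algebra_simps)
  ultimately have "1 \<le> th * l powr (th - 1) + (1 - th) * l powr th" by simp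
  then have "l * 1 \<le> l * (th * l powr (th - 1) + (1 - th) * l powr th)"
    using assms by (intro mult_left_mono) auto
  moreover have "l * l powr (th - 1) = l powr th" "l * l powr th = l powr (th + 1)"
    using assms by (simp_all add: powr_add powr_diff)
  moreover have "l * (th * l powr (th - 1) + (1 - th) * l powr th) = th * (l * l powr (th-1)) + (1-th) * (l * l powr th)"
    by (simp add: algebra_simps)
  ultimately show ?thesis by simp
qed

lemma psi_mono:
  fixes th z1 z2 :: real assumes "0 < th" "th < 1" "0 \<le> z1" "z1 \<le> z2" "z2 \<le> 1"
  shows "z1 powr th - th * z1 \<le> z2 powr th - th * z2"
proof (rule DERIV_nonneg_imp_increasing_open[OF assms(4)])
  fix z assume z: "z1 < z" "z < z2"
  have "((\<lambda>z. z powr th - th * z) has_real_derivative (th * z powr (th - 1) - th)) (at z)"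
    using z assms by (auto intro!: derivative_eq_intros)
  moreover have "z powr (th - 1) \<ge> 1"
  proof -
    have "z powr (th - 1) \<ge> z powr 0" using z assms by (intro powr_mono') auto
    then show ?thesis using z assms by simp
  qed
  then have "th * z powr (th - 1) - th \<ge> 0" using assms by (simp add: algebra_simps)
  ultimately show "\<exists>y. ((\<lambda>z. z powr th - th * z) has_real_derivative y) (at z) \<and> 0 \<le> y" by blast
next
  show "continuous_on {z1..z2} (\<lambda>z. z powr th - th * z)"
    using assms by (intro continuous_intros continuous_on_powr') auto
qed

lemma strong_conv:
  fixes th x y :: real assumes th: "0 < th" "th < 1" and x: "0 < x" "x \<le> 1" and y: "0 \<le> y" "y \<le> 1"
  shows "(y powr (th + 1) - x powr (th + 1)) / (th + 1) - x powr th * (y - x) \<ge> th / 2 * (y - x)\<^sup>2"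
proof -
  define \<phi> where "\<phi> z = z powr (th + 1) / (th + 1) - x powr th * z - th / 2 * (z - x)\<^sup>2" for z
  have der: "(\<phi> has_real_derivative ((z powr th - th * z) - (x powr th - th * x))) (at z)" if "z > 0" for z
  proof -
    have "(\<phi> has_real_derivative ((th + 1) * z powr (th + 1 - 1) / (th + 1) - x powr th * 1 - th / 2 * (2 * (z - x) * 1))) (at z)"
      unfolding \<phi>_def using that th by (intro derivative_eq_intros) auto
    then show ?thesis by (rule DERIV_cong) (use th in \<open>simp add: field_simps\<close>)
  qed
  have cont: "continuous_on A \<phi>" if "A \<subseteq> {0..}" for A
    unfolding \<phi>_def using that th by (intro continuous_intros continuous_on_powr') auto
  have "\<phi> x \<le> \<phi> y"
  proof (cases "x \<le> y")
    case True
    show ?thesis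
    proof (rule DERIV_nonneg_imp_increasing_open[of x y \<phi>, OF True])
      fix z assume z: "x < z" "z < y"
      have "(z powr th - th * z) - (x powr th - th * x) \<ge> 0"
        using psi_mono[of th x z] z th x y by auto
      then show "\<exists>d. (\<phi> has_real_derivative d) (at z) \<and> 0 \<le> d" using der[of z] z x by auto
    qed (use cont x in auto)
  next
    case False
    show ?thesis
    proof (rule DERIV_nonpos_imp_decreasing_open[of y x \<phi>])
      show "y \<le> x" using False by simp
      fix z assume z: "y < z" "z < x"
      have "(z powr th - th * z) - (x powr th - th * x) \<le> 0"
        using psi_mono[of th z x] z th x y by auto
      then show "\<exists>d. (\<phi> has_real_derivative d) (at z) \<and> d \<le> 0" using der[of z] z y by auto
    qed (use cont y in auto)
  qed
  then have "x powr (th + 1) / (th + 1) - x powr th * x - th / 2 * (x - x)\<^sup>2 \<le> y powr (th + 1) / (th + 1) - x powr th * y - th / 2 * (y - x)\<^sup>2"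
    unfolding \<phi>_def .
  moreover have "(y powr (th + 1) - x powr (th + 1)) / (th + 1) = y powr (th + 1) / (th + 1) - x powr (th + 1) / (th + 1)"
    by (rule diff_divide_distrib)
  moreover have "x powr th * (y - x) = x powr th * y - x powr th * x" by (simp add: algebra_simps)
  ultimately show ?thesis by simp
qed



lemma powr_inv_cancel: fixes z th :: real assumes "z > 0" "th > 0"
  shows "(z powr (1/th)) powr th = z"
proof -
  have "(z powr (1/th)) powr th = z powr 1" using assms by (simp add: powr_powr del: powr_one')
  also have "\<dots> = z" using assms by (simp add: powr_one)
  finally show ?thesis .
qed

lemma core_exists:
  fixes a c d :: "nat \<Rightarrow> real" and I :: "nat set"
  assumes fin: "finite I" and b: "b > 0" and th: "0 < th" "th < 1"
    and c: "\<forall>i\<in>I. c i \<ge> 0" and a: "\<forall>i\<in>I. a i > 0" and d: "\<forall>i\<in>I. d i > 0"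
    and h2: "\<forall>i\<in>I. a i + b * c i * (\<Sum>j\<in>I. c j) \<le> d i"
  shows "\<exists>x. \<forall>i\<in>I. 0 < x i \<and> x i \<le> 1 \<and> a i + b * c i * (\<Sum>j\<in>I. c j * x j) = d i * x i powr th"
proof -
  define C where "C = (\<Sum>j\<in>I. c j)"
  define h where "h S i = ((a i + b * c i * S) / d i) powr (1 / th)" for S i
  define g where "g S = (\<Sum>i\<in>I. c i * h S i) - S" for S
  have C0: "C \<ge> 0" unfolding C_def using c by (simp add: sum_nonneg)
  have base_pos: "(a i + b * c i * S) / d i > 0" if "i \<in> I" "S \<ge> 0" for i S
    using a d c b that by (intro divide_pos_pos add_pos_nonneg) auto
  have cont: "continuous_on {0..C} g"
    unfolding g_def h_def
    by (intro continuous_intros continuous_on_powr') (use base_pos th in \<open>fastforce intro: less_imp_le\<close>)+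
  have "g C \<le> 0"
  proof -
    have "c i * h C i \<le> c i * 1" if "i \<in> I" for i
    proof -
      have "(a i + b * c i * C) / d i \<le> 1" using h2 d that unfolding C_def by auto
      then have "h C i \<le> 1" unfolding h_def using base_pos[OF that C0] th
        by (intro powr_le1) auto
      then show ?thesis using c that by (intro mult_left_mono) auto
    qed
    then have "(\<Sum>i\<in>I. c i * h C i) \<le> C" unfolding C_def
      by (metis (no_types, lifting) mult.right_neutral sum_mono)
    then show ?thesis unfolding g_def by simp
  qed
  moreover have "g 0 \<ge> 0" unfolding g_def h_def using c by (simp add: sum_nonneg)
  ultimately obtain S where S: "0 \<le> S" "S \<le> C" "g S = 0"
    using IVT2'[where f=g and a=0 and b=C and y=0] cont C0 by auto
  define x where "x i = h S i" for i
  have xth: "x i powr th = (a i + b * c i * S) / d i" if "i \<in> I" for i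
    unfolding x_def h_def using th base_pos[OF that S(1)] by (simp add: powr_inv_cancel)
  have Sx: "(\<Sum>j\<in>I. c j * x j) = S" using S(3) unfolding g_def x_def by simp
  show ?thesis
  proof (intro exI ballI conjI)
    fix i assume i: "i \<in> I"
    show "0 < x i" unfolding x_def h_def using base_pos[OF i S(1)] by (metis powr_gt_zero less_irrefl)
    have "(a i + b * c i * S) / d i \<le> 1"
    proof -
      have "b * c i * S \<le> b * c i * C" using S b c i by (intro mult_left_mono) auto
      then show ?thesis using h2 d i unfolding C_def by auto
    qed
    then show "x i \<le> 1" unfolding x_def h_def using base_pos[OF i S(1)] th
      by (intro powr_le1) auto
    show "a i + b * c i * (\<Sum>j\<in>I. c j * x j) = d i * x i powr th"
      unfolding Sx xth[OF i] using d i by force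
  qed
qed

lemma core_less_false:
  fixes a c d x y :: "nat \<Rightarrow> real" and I :: "nat set"
  assumes fin: "finite I" and b: "b > 0" and th: "0 < th" "th < 1"
    and c: "\<forall>i\<in>I. c i \<ge> 0" and a: "\<forall>i\<in>I. a i > 0" and d: "\<forall>i\<in>I. d i > 0"
    and x: "\<forall>i\<in>I. 0 < x i \<and> a i + b * c i * (\<Sum>j\<in>I. c j * x j) = d i * x i powr th"
    and y: "\<forall>i\<in>I. 0 < y i \<and> a i + b * c i * (\<Sum>j\<in>I. c j * y j) = d i * y i powr th
              \<and> (1 - th) * (a i + b * c i * (\<Sum>j\<in>I. c j * y j)) < a i"
    and lt: "(\<Sum>j\<in>I. c j * x j) < (\<Sum>j\<in>I. c j * y j)"
  shows False
proof -
  define Sx where "Sx = (\<Sum>j\<in>I. c j * x j)"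
  define Sy where "Sy = (\<Sum>j\<in>I. c j * y j)"
  have Sx0: "Sx \<ge> 0" unfolding Sx_def using c x by (intro sum_nonneg) (simp add: less_imp_le)
  have "Sx \<noteq> 0"
  proof
    assume "Sx = 0"
    then have "\<forall>j\<in>I. c j * x j = 0" unfolding Sx_def using fin c x
      by (subst sum_nonneg_eq_0_iff[symmetric]) (auto simp: less_imp_le)
    then have "\<forall>j\<in>I. c j = 0" using x by (metis less_irrefl mult_eq_0_iff)
    then have "Sy = 0" unfolding Sy_def by simp
    with lt \<open>Sx = 0\<close> show False unfolding Sx_def Sy_def by simp
  qed
  with Sx0 have Sxp: "Sx > 0" by simp
  define l where "l = Sy / Sx"
  have l1: "l > 1" unfolding l_def using Sxp lt unfolding Sx_def Sy_def by simp
  have Syl: "Sy = l * Sx" unfolding l_def using Sxp by simp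
  define L where "L = l powr th"
  have L1: "L > 1" unfolding L_def using l1 th by simp
  have bn: "l \<le> th * L + (1 - th) * (l * L)"
    using bern[OF l1 th] l1 unfolding L_def by (simp add: powr_add mult.commute)
  have ylt: "y i < l * x i" if i: "i \<in> I" for i
  proof (rule ccontr)
    assume "\<not> y i < l * x i"
    then have "(l * x i) powr th \<le> y i powr th" using th x i l1 by (intro powr_mono2) auto
    moreover have "(l * x i) powr th = L * x i powr th" unfolding L_def using l1 x i by (simp add: powr_mult)
    ultimately have le: "d i * (L * x i powr th) \<le> d i * y i powr th" using d i by (intro mult_left_mono) auto
    define u where "u = b * c i * Sx"
    have u0: "u \<ge> 0" unfolding u_def using b c i Sx0 by simp
    have ex: "d i * x i powr th = a i + u" using x i unfolding u_def Sx_def by simp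
    have bu: "b * c i * Sy = l * u" unfolding u_def Syl by simp
    have ey: "d i * y i powr th = a i + l * u" using y i bu unfolding Sy_def by metis
    have cond: "(1 - th) * (a i + l * u) < a i" using y i bu unfolding Sy_def by metis
    have le2: "L * (a i + u) \<le> a i + l * u" using le ex ey by (simp add: algebra_simps)
    have p1: "(1 - th) * l * u * (L - 1) < th * a i * (L - 1)"
    proof -
      have "(1 - th) * l * u < th * a i" using cond by (simp add: algebra_simps)
      then show ?thesis using L1 by (intro mult_strict_right_mono) auto
    qed
    have p2: "u * l \<le> u * (th * L + (1 - th) * (l * L))" using bn u0 by (intro mult_left_mono) auto
    have "th * (L * (a i + u) - a i - l * u) > 0"
    proof -
      have e1: "th * (L * (a i + u) - a i - l * u) = th * a i * (L - 1) + th * u * L - th * l * u"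
        by (simp add: algebra_simps)
      have e2: "(1 - th) * l * u * (L - 1) + th * u * L - th * l * u = u * (th * L + (1 - th) * (l * L)) - u * l"
        by (simp add: algebra_simps)
      show ?thesis unfolding e1 using p1 p2 e2 by linarith
    qed
    then have "L * (a i + u) - a i - l * u > 0" using th by (simp add: zero_less_mult_iff)
    with le2 show False by simp
  qed
  obtain j where j: "j \<in> I" "c j > 0"
  proof -
    have "\<exists>j\<in>I. c j \<noteq> 0" using Sxp unfolding Sx_def by (metis (no_types, lifting) less_irrefl mult_zero_left sum.neutral)
    then show ?thesis using c that by force
  qed
  have "Sy < (\<Sum>i\<in>I. c i * (l * x i))" unfolding Sy_def
  proof (rule sum_strict_mono_ex1[OF fin])
    show "\<forall>i\<in>I. c i * y i \<le> c i * (l * x i)" using ylt c by (auto intro: mult_left_mono less_imp_le)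
    show "\<exists>i\<in>I. c i * y i < c i * (l * x i)" using ylt[OF j(1)] j by (intro bexI[of _ j]) auto
  qed
  also have "\<dots> = l * Sx" unfolding Sx_def by (simp add: sum_distrib_left algebra_simps)
  finally show False using Syl by simp
qed

lemma core_max:
  fixes a c d x y :: "nat \<Rightarrow> real" and I :: "nat set"
  assumes fin: "finite I" and b: "b > 0" and th: "0 < th" "th < 1"
    and c: "\<forall>i\<in>I. c i \<ge> 0" and d: "\<forall>i\<in>I. d i > 0"
    and hC: "\<forall>i\<in>I. b * c i * (\<Sum>j\<in>I. c j) \<le> th * d i"
    and x: "\<forall>i\<in>I. 0 < x i \<and> x i \<le> 1 \<and> a i + b * c i * (\<Sum>j\<in>I. c j * x j) = d i * x i powr th"
    and y: "\<forall>i\<in>I. 0 \<le> y i \<and> y i \<le> 1"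
  shows "1/2 * (\<Sum>i\<in>I. a i * y i) + b/4 * (\<Sum>i\<in>I. c i * y i)\<^sup>2 - 1/(2*(th+1)) * (\<Sum>i\<in>I. d i * y i powr (th+1))
       \<le> 1/2 * (\<Sum>i\<in>I. a i * x i) + b/4 * (\<Sum>i\<in>I. c i * x i)\<^sup>2 - 1/(2*(th+1)) * (\<Sum>i\<in>I. d i * x i powr (th+1))"
proof -
  define S where "S = (\<Sum>i\<in>I. c i * x i)"
  define T where "T = (\<Sum>i\<in>I. c i * y i)"
  define C where "C = (\<Sum>i\<in>I. c i)"
  define D where "D i = (y i powr (th + 1) - x i powr (th + 1)) / (th + 1) - x i powr th * (y i - x i)" for i
  have Dge: "D i \<ge> th / 2 * (y i - x i)\<^sup>2" if "i \<in> I" for i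
    unfolding D_def using strong_conv[OF th, of "x i" "y i"] x y that by auto
  have e1: "(\<Sum>i\<in>I. d i * D i) = (\<Sum>i\<in>I. d i * y i powr (th + 1)) / (th + 1) - (\<Sum>i\<in>I. d i * x i powr (th + 1)) / (th + 1)
       - (\<Sum>i\<in>I. (a i + b * S * c i) * (y i - x i))"
  proof -
    have "d i * D i = d i * y i powr (th + 1) / (th + 1) - d i * x i powr (th + 1) / (th + 1) - (a i + b * S * c i) * (y i - x i)"
      if "i \<in> I" for i
    proof -
      have h: "d i * x i powr th = a i + b * S * c i" using x that unfolding S_def by (simp add: algebra_simps)
      have "d i * D i = d i * y i powr (th + 1) / (th + 1) - d i * x i powr (th + 1) / (th + 1) - (d i * x i powr th) * (y i - x i)"
        unfolding D_def by (simp add: algebra_simps diff_divide_distrib)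
      then show ?thesis unfolding h .
    qed
    then have "(\<Sum>i\<in>I. d i * D i) = (\<Sum>i\<in>I. d i * y i powr (th + 1) / (th + 1) - d i * x i powr (th + 1) / (th + 1) - (a i + b * S * c i) * (y i - x i))"
      by (rule sum.cong[OF refl])
    then show ?thesis by (simp add: sum_subtractf sum_divide_distrib)
  qed
  have e3: "T - S = (\<Sum>i\<in>I. c i * (y i - x i))" unfolding T_def S_def by (simp add: algebra_simps sum_subtractf)
  have e2: "(\<Sum>i\<in>I. (a i + b * S * c i) * (y i - x i)) = (\<Sum>i\<in>I. a i * y i) - (\<Sum>i\<in>I. a i * x i) + b * S * (T - S)"
    unfolding e3
    by (simp add: algebra_simps sum.distrib sum_subtractf sum_distrib_left)
  have b1: "(\<Sum>i\<in>I. d i * D i) \<ge> th / 2 * (\<Sum>i\<in>I. d i * (y i - x i)\<^sup>2)"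
  proof -
    have "(\<Sum>i\<in>I. th / 2 * (d i * (y i - x i)\<^sup>2)) \<le> (\<Sum>i\<in>I. d i * D i)"
    proof (rule sum_mono)
      fix i assume i: "i \<in> I"
      have "d i * (th / 2 * (y i - x i)\<^sup>2) \<le> d i * D i" using Dge[OF i] d i by (intro mult_left_mono) auto
      then show "th / 2 * (d i * (y i - x i)\<^sup>2) \<le> d i * D i" by (simp add: algebra_simps)
    qed
    then show ?thesis by (simp add: sum_distrib_left)
  qed
  have cs: "(T - S)\<^sup>2 \<le> C * (\<Sum>i\<in>I. c i * (y i - x i)\<^sup>2)"
  proof -
    have "(\<Sum>i\<in>I. sqrt (c i) * (sqrt (c i) * (y i - x i)))\<^sup>2 \<le> (\<Sum>i\<in>I. (sqrt (c i))\<^sup>2) * (\<Sum>i\<in>I. (sqrt (c i) * (y i - x i))\<^sup>2)"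
      by (rule Cauchy_Schwarz_ineq_sum)
    moreover have "(\<Sum>i\<in>I. sqrt (c i) * (sqrt (c i) * (y i - x i))) = T - S"
      unfolding e3 using c by (intro sum.cong) (auto simp: mult.assoc[symmetric])
    moreover have "(\<Sum>i\<in>I. (sqrt (c i))\<^sup>2) = C" unfolding C_def using c by (intro sum.cong) auto
    moreover have "(\<Sum>i\<in>I. (sqrt (c i) * (y i - x i))\<^sup>2) = (\<Sum>i\<in>I. c i * (y i - x i)\<^sup>2)"
      using c by (intro sum.cong) (auto simp: power_mult_distrib)
    ultimately show ?thesis by simp
  qed
  have b2: "b * (C * (\<Sum>i\<in>I. c i * (y i - x i)\<^sup>2)) \<le> th * (\<Sum>i\<in>I. d i * (y i - x i)\<^sup>2)"
  proof -
    have "(\<Sum>i\<in>I. (b * c i * C) * (y i - x i)\<^sup>2) \<le> (\<Sum>i\<in>I. (th * d i) * (y i - x i)\<^sup>2)"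
      using hC unfolding C_def by (intro sum_mono mult_right_mono) auto
    then show ?thesis by (simp add: sum_distrib_left algebra_simps)
  qed
  have "b * (T - S)\<^sup>2 \<le> b * (C * (\<Sum>i\<in>I. c i * (y i - x i)\<^sup>2))" using cs b by (intro mult_left_mono) auto
  with b2 b1 have key: "b / 4 * (T - S)\<^sup>2 \<le> 1/2 * (\<Sum>i\<in>I. d i * D i)" by simp
  have sq: "b/4 * T\<^sup>2 = b/4 * S\<^sup>2 + (b * S * (T - S)) / 2 + (b * (T - S)\<^sup>2) / 4"
    by (simp add: power2_eq_square field_simps)
  have key': "(b * (T - S)\<^sup>2) / 4 \<le> 1/2 * (\<Sum>i\<in>I. d i * D i)" using key by simp
  have q: "1/(2*(th+1)) * Z = 1/2 * (Z / (th + 1))" for Z by simp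
  show ?thesis unfolding T_def[symmetric] S_def[symmetric] q
    using key' e1 e2 sq by linarith
qed



lemma sq_powr: fixes s p :: real assumes "s \<ge> 0" "p > 0"
  shows "(s\<^sup>2) powr (p/2) = s powr p"
proof (cases "s = 0")
  case True then show ?thesis using assms by simp
next
  case False
  then have e: "s\<^sup>2 = s powr 2" using assms by (simp add: powr_realpow)
  have "(s\<^sup>2) powr (p/2) = (s powr 2) powr (p/2)" by (simp only: e)
  also have "\<dots> = s powr p" by (simp add: powr_powr)
  finally show ?thesis .
qed

theorem lemma2p3:
  fixes V :: "real^3 \<Rightarrow> real" and b p :: real and k :: nat and r :: "nat \<Rightarrow> real"
    and u :: "nat \<Rightarrow> real^3 \<Rightarrow> real" and G :: "nat \<Rightarrow> real^3 \<Rightarrow> real^3"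
  assumes "2 < p" "p < 4" "b > 0"
    and "continuous_on UNIV V" "\<forall>x y. norm x = norm y \<longrightarrow> V x = V y"
    and "bdd_below (range V)" "(INF x. V x) > 0"
    and "Lambda k r"
    and "H_k V k r u G"
    and "\<forall>i\<in>{1..k+1}. (4 - p) * Lp_int p (annulus k r i) (u i)
                         < 2 * nrm_sq V (annulus k r i) (u i) (G i)"
    and "\<forall>i\<in>{1..k+1}. nrm_sq V (annulus k r i) (u i) (G i) + b * (grad_sq (annulus k r i) (G i))\<^sup>2
            + b * grad_sq (annulus k r i) (G i) * (\<Sum>j\<in>{1..k+1} - {i}. grad_sq (annulus k r j) (G j))
          \<le> Lp_int p (annulus k r i) (u i)"
  shows "\<exists>t. (\<forall>i\<in>{1..k+1}. 0 < t i \<and> t i \<le> 1) \<and>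
             N_minus V b p k r (scU t u) (scG t G) \<and>
             (\<forall>s. (\<forall>i\<in>{1..k+1}. 0 < s i \<and> s i \<le> 1) \<and> N_minus V b p k r (scU s u) (scG s G)
                  \<longrightarrow> (\<forall>i\<in>{1..k+1}. s i = t i)) \<and>
             (\<forall>s. (\<forall>i\<in>{1..k+1}. 0 \<le> s i \<and> s i \<le> 1)
                  \<longrightarrow> E_b V b p k r (scU s u) (scG s G) \<le> E_b V b p k r (scU t u) (scG t G))"
proof -
  note p2 = assms(1) and p4 = assms(2) and b = assms(3) and HK = assms(9) and h1 = assms(10) and h2 = assms(11)
  define I where "I = {1..k+1}"
  define B where "B i = annulus k r i" for i
  define a where "a i = nrm_sq V (B i) (u i) (G i)" for i
  define c where "c i = grad_sq (B i) (G i)" for i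
  define d where "d i = Lp_int p (B i) (u i)" for i
  define th where "th = p/2 - 1"
  define C where "C = (\<Sum>j\<in>I. c j)"
  have fin: "finite I" unfolding I_def by simp
  have th: "0 < th" "th < 1" unfolding th_def using p2 p4 by auto
  have th1: "th + 1 = p/2" unfolding th_def by simp
  have c0: "\<forall>i\<in>I. c i \<ge> 0" unfolding c_def by (simp add: grad_sq_nonneg)
  have d0: "\<forall>i\<in>I. d i \<ge> 0" unfolding d_def by (simp add: Lp_nonneg)
  have rem: "(\<Sum>j\<in>I - {i}. f j) = (\<Sum>j\<in>I. f j) - f i" if "i \<in> I" for i and f :: "nat \<Rightarrow> real"
    using fin that by (simp add: sum_diff1)
  have H2: "\<forall>i\<in>I. a i + b * c i * C \<le> d i"
  proof
    fix i assume i: "i \<in> I"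
    have "a i + b * (c i)\<^sup>2 + b * c i * (\<Sum>j\<in>I - {i}. c j) \<le> d i"
      using h2 i unfolding I_def a_def c_def d_def B_def by blast
    then have "a i + b * (c i)\<^sup>2 + b * c i * (C - c i) \<le> d i"
      unfolding rem[OF i, of c] C_def .
    then show "a i + b * c i * C \<le> d i" by (simp add: power2_eq_square algebra_simps)
  qed
  have H1: "\<forall>i\<in>I. (1 - th) * d i < a i"
    using h1 unfolding I_def a_def d_def B_def th_def by (auto simp: algebra_simps)
  have a0: "\<forall>i\<in>I. a i > 0"
  proof
    fix i assume i: "i \<in> I"
    have "(1 - th) * d i \<ge> 0" using th d0 i by simp
    then show "a i > 0" using H1 i by fastforce
  qed
  have dpos: "\<forall>i\<in>I. d i > 0"
  proof
    fix i assume i: "i \<in> I"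
    have "b * c i * C \<ge> 0" using b c0 i unfolding C_def by (simp add: sum_nonneg)
    then show "d i > 0" using H2 a0 i by fastforce
  qed
  have hC: "\<forall>i\<in>I. b * c i * (\<Sum>j\<in>I. c j) \<le> th * d i"
  proof
    fix i assume i: "i \<in> I"
    have "(1 - th) * d i < a i" "a i + b * c i * C \<le> d i" using H1 H2 i by auto
    then show "b * c i * (\<Sum>j\<in>I. c j) \<le> th * d i" unfolding C_def by (simp add: algebra_simps)
  qed
  have scN: "nrm_sq V (B i) (scU s u i) (scG s G i) = (s i)\<^sup>2 * a i" for s i
    unfolding scU_def scG_def a_def by (rule nrm_sq_scale)
  have scC: "grad_sq (B i) (scG s G i) = (s i)\<^sup>2 * c i" for s i
    unfolding scG_def c_def by (rule grad_sq_scale)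
  have scL: "Lp_int p (B i) (scU s u i) = (s i)\<^sup>2 powr (th + 1) * d i" if "s i \<ge> 0" for s i
    unfolding scU_def d_def th1 using Lp_scale[OF that] sq_powr[OF that] p2 by simp
  have Eform: "E_b V b p k r (scU s u) (scG s G) =
     1/2 * (\<Sum>i\<in>I. a i * (s i)\<^sup>2) + b/4 * (\<Sum>i\<in>I. c i * (s i)\<^sup>2)\<^sup>2 - 1/(2*(th+1)) * (\<Sum>i\<in>I. d i * ((s i)\<^sup>2) powr (th+1))"
    if s: "\<forall>i\<in>I. s i \<ge> 0" for s
  proof -
    have "(\<Sum>i\<in>I. nrm_sq V (B i) (scU s u i) (scG s G i)) = (\<Sum>i\<in>I. a i * (s i)\<^sup>2)"
      by (intro sum.cong) (auto simp: scN)
    moreover have "(\<Sum>i\<in>I. grad_sq (B i) (scG s G i)) = (\<Sum>i\<in>I. c i * (s i)\<^sup>2)"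
      by (intro sum.cong) (auto simp: scC)
    moreover have "(\<Sum>i\<in>I. Lp_int p (B i) (scU s u i)) = (\<Sum>i\<in>I. d i * ((s i)\<^sup>2) powr (th+1))"
      using s by (intro sum.cong) (auto simp: scL)
    moreover have "2 * (th + 1) = p" unfolding th_def by simp
    ultimately show ?thesis unfolding E_b_def I_def B_def by simp
  qed
  have nehari_iff: "nrm_sq V (B i) (scU s u i) (scG s G i) + b * (grad_sq (B i) (scG s G i))\<^sup>2
          + b * grad_sq (B i) (scG s G i) * (\<Sum>j\<in>I - {i}. grad_sq (B j) (scG s G j))
          = Lp_int p (B i) (scU s u i)
       \<longleftrightarrow> a i + b * c i * (\<Sum>j\<in>I. c j * (s j)\<^sup>2) = d i * ((s i)\<^sup>2) powr th"
    if s: "\<forall>j\<in>I. s j > 0" and i: "i \<in> I" for s i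
  proof -
    let ?y = "(s i)\<^sup>2"
    have yp: "?y > 0" using s i by force
    have sumeq: "(\<Sum>j\<in>I - {i}. (s j)\<^sup>2 * c j) = (\<Sum>j\<in>I. c j * (s j)\<^sup>2) - c i * ?y"
      using rem[OF i, of "\<lambda>j. c j * (s j)\<^sup>2"] by (simp add: mult.commute)
    have pw: "?y powr (th + 1) = ?y * ?y powr th" using yp by (simp add: powr_add)
    have lhs: "nrm_sq V (B i) (scU s u i) (scG s G i) + b * (grad_sq (B i) (scG s G i))\<^sup>2
          + b * grad_sq (B i) (scG s G i) * (\<Sum>j\<in>I - {i}. grad_sq (B j) (scG s G j))
          = ?y * (a i + b * c i * (\<Sum>j\<in>I. c j * (s j)\<^sup>2))"
      unfolding scN scC sumeq by (simp add: power2_eq_square algebra_simps)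
    have rhs: "Lp_int p (B i) (scU s u i) = ?y * (d i * ?y powr th)"
      using s i by (simp add: scL less_imp_le pw)
    show ?thesis unfolding lhs rhs using yp by simp
  qed
  obtain x where x: "\<forall>i\<in>I. 0 < x i \<and> x i \<le> 1 \<and> a i + b * c i * (\<Sum>j\<in>I. c j * x j) = d i * x i powr th"
    using core_exists[OF fin b th c0 a0 dpos] H2 unfolding C_def by blast
  have cond: "(1 - th) * (a i + b * c i * (\<Sum>j\<in>I. c j * z j)) < a i"
    if z: "\<forall>i\<in>I. 0 < z i \<and> z i \<le> 1 \<and> a i + b * c i * (\<Sum>j\<in>I. c j * z j) = d i * z i powr th"
      and i: "i \<in> I" for z i
  proof -
    have "z i powr th \<le> 1" using z i th by (intro powr_le1) auto
    then have "d i * z i powr th \<le> d i" using dpos i by (simp add: mult_left_le)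
    then have "(1 - th) * (d i * z i powr th) \<le> (1 - th) * d i" using th by (intro mult_left_mono) auto
    then show ?thesis using z i H1 by force
  qed
  have uniq: "\<forall>i\<in>I. z i = x i"
    if z: "\<forall>i\<in>I. 0 < z i \<and> z i \<le> 1 \<and> a i + b * c i * (\<Sum>j\<in>I. c j * z j) = d i * z i powr th" for z
  proof -
    have "(\<Sum>j\<in>I. c j * z j) = (\<Sum>j\<in>I. c j * x j)"
    proof (rule linorder_cases)
      assume "(\<Sum>j\<in>I. c j * z j) < (\<Sum>j\<in>I. c j * x j)"
      then show ?thesis using core_less_false[OF fin b th c0 a0 dpos, of z x] z x cond[OF x] by auto
    next
      assume "(\<Sum>j\<in>I. c j * x j) < (\<Sum>j\<in>I. c j * z j)"
      then show ?thesis using core_less_false[OF fin b th c0 a0 dpos, of x z] z x cond[OF z] by auto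
    qed
    then have "\<forall>i\<in>I. d i * z i powr th = d i * x i powr th" using z x by metis
    then have e: "\<forall>i\<in>I. z i powr th = x i powr th" using dpos by force
    show ?thesis
    proof
      fix i assume i: "i \<in> I"
      have "(z i powr th) powr (1/th) = (x i powr th) powr (1/th)" using e i by simp
      then have "z i powr 1 = x i powr 1" using th by (simp add: powr_powr del: powr_one')
      then show "z i = x i" using z x i by (simp add: powr_one less_imp_le)
    qed
  qed
  define t where "t i = sqrt (x i)" for i
  have t: "\<forall>i\<in>I. 0 < t i \<and> t i \<le> 1" unfolding t_def using x by auto
  have tsq: "(t i)\<^sup>2 = x i" if "i \<in> I" for i unfolding t_def using x that by auto
  have sumt: "(\<Sum>j\<in>I. c j * (t j)\<^sup>2) = (\<Sum>j\<in>I. c j * x j)" by (intro sum.cong) (auto simp: tsq)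
  have Nt: "N_minus V b p k r (scU t u) (scG t G)"
    unfolding N_minus_def
  proof (intro conjI)
    show "H_k V k r (scU t u) (scG t G)"
      unfolding H_k_def scU_def scG_def
      using HK t unfolding H_k_def I_def by (auto intro!: H_sp_scale)
    show "\<forall>i\<in>{1..k+1}. \<not> (AE x in lborel. scU t u i x = 0) \<and>
        nrm_sq V (annulus k r i) (scU t u i) (scG t G i) + b * (grad_sq (annulus k r i) (scG t G i))\<^sup>2
          + b * grad_sq (annulus k r i) (scG t G i) *
              (\<Sum>j\<in>{1..k+1} - {i}. grad_sq (annulus k r j) (scG t G j))
          = Lp_int p (annulus k r i) (scU t u i) \<and>
        (4 - p) * Lp_int p (annulus k r i) (scU t u i) < 2 * nrm_sq V (annulus k r i) (scU t u i) (scG t G i)"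
    proof (intro ballI conjI)
      fix i assume i': "i \<in> {1..k+1}"
      then have i: "i \<in> I" unfolding I_def .
      have tp: "\<forall>j\<in>I. t j > 0" using t by auto
      have Lt: "Lp_int p (B i) (scU t u i) = x i * (d i * x i powr th)"
        using t i x by (simp add: scL less_imp_le tsq powr_add)
      have Lpos: "Lp_int p (B i) (scU t u i) > 0" unfolding Lt using x dpos i by (intro mult_pos_pos) auto
      then show "\<not> (AE x in lborel. scU t u i x = 0)" unfolding B_def by (rule Lp_pos_not_AE)
      have "a i + b * c i * (\<Sum>j\<in>I. c j * (t j)\<^sup>2) = d i * ((t i)\<^sup>2) powr th"
        unfolding sumt tsq[OF i] using x i by simp
      then show "nrm_sq V (annulus k r i) (scU t u i) (scG t G i) + b * (grad_sq (annulus k r i) (scG t G i))\<^sup>2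
          + b * grad_sq (annulus k r i) (scG t G i) *
              (\<Sum>j\<in>{1..k+1} - {i}. grad_sq (annulus k r j) (scG t G j))
          = Lp_int p (annulus k r i) (scU t u i)"
        using nehari_iff[OF tp i] unfolding B_def I_def by simp
      have "(4 - p) * Lp_int p (B i) (scU t u i) < 2 * nrm_sq V (B i) (scU t u i) (scG t G i)"
      proof -
        have "(1 - th) * (d i * x i powr th) < a i" using cond[OF x i] x i by simp
        then have "x i * ((1 - th) * (d i * x i powr th)) < x i * a i" using x i by simp
        moreover have e4: "4 - p = 2 * (1 - th)" unfolding th_def by simp
        have "(4 - p) * (x i * (d i * x i powr th)) = 2 * (x i * ((1 - th) * (d i * x i powr th)))"
          unfolding e4 by (simp add: algebra_simps)
        ultimately show ?thesis unfolding Lt scN tsq[OF i] by (simp add: algebra_simps)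
      qed
      then show "(4 - p) * Lp_int p (annulus k r i) (scU t u i) < 2 * nrm_sq V (annulus k r i) (scU t u i) (scG t G i)"
        unfolding B_def .
    qed
  qed
  show ?thesis
  proof (intro exI conjI allI impI)
    show "\<forall>i\<in>{1..k+1}. 0 < t i \<and> t i \<le> 1" using t unfolding I_def .
    show "N_minus V b p k r (scU t u) (scG t G)" by (rule Nt)
  next
    fix s :: "nat \<Rightarrow> real" assume s: "(\<forall>i\<in>{1..k+1}. 0 < s i \<and> s i \<le> 1) \<and> N_minus V b p k r (scU s u) (scG s G)"
    have sp: "\<forall>j\<in>I. s j > 0" using s unfolding I_def by auto
    have z: "\<forall>i\<in>I. 0 < (s i)\<^sup>2 \<and> (s i)\<^sup>2 \<le> 1 \<and> a i + b * c i * (\<Sum>j\<in>I. c j * (s j)\<^sup>2) = d i * ((s i)\<^sup>2) powr th"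
    proof
      fix i assume i: "i \<in> I"
      have "0 < s i" "s i \<le> 1" using s i unfolding I_def by auto
      then have "(s i)\<^sup>2 \<le> 1" by (simp add: power_le_one)
      moreover have "a i + b * c i * (\<Sum>j\<in>I. c j * (s j)\<^sup>2) = d i * ((s i)\<^sup>2) powr th"
        using s i nehari_iff[OF sp i] unfolding N_minus_def I_def B_def by auto
      ultimately show "0 < (s i)\<^sup>2 \<and> (s i)\<^sup>2 \<le> 1 \<and> a i + b * c i * (\<Sum>j\<in>I. c j * (s j)\<^sup>2) = d i * ((s i)\<^sup>2) powr th"
        using sp i by force
    qed
    have "\<forall>i\<in>I. (s i)\<^sup>2 = x i" using uniq[OF z] .
    then show "\<forall>i\<in>{1..k+1}. s i = t i" unfolding t_def I_def using sp unfolding I_def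
      by (metis real_sqrt_abs abs_of_pos)
  next
    fix s :: "nat \<Rightarrow> real" assume s: "\<forall>i\<in>{1..k+1}. 0 \<le> s i \<and> s i \<le> 1"
    have s0: "\<forall>i\<in>I. s i \<ge> 0" using s unfolding I_def by auto
    have t0: "\<forall>i\<in>I. t i \<ge> 0" using t by (auto simp: less_imp_le)
    have y: "\<forall>i\<in>I. 0 \<le> (s i)\<^sup>2 \<and> (s i)\<^sup>2 \<le> 1" using s unfolding I_def by (auto simp: power_le_one)
    have ex: "(\<Sum>i\<in>I. f i ((t i)\<^sup>2)) = (\<Sum>i\<in>I. f i (x i))" for f :: "nat \<Rightarrow> real \<Rightarrow> real"
      by (intro sum.cong) (auto simp: tsq)
    have "E_b V b p k r (scU s u) (scG s G) =
     1/2 * (\<Sum>i\<in>I. a i * (s i)\<^sup>2) + b/4 * (\<Sum>i\<in>I. c i * (s i)\<^sup>2)\<^sup>2 - 1/(2*(th+1)) * (\<Sum>i\<in>I. d i * ((s i)\<^sup>2) powr (th+1))"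
      by (rule Eform[OF s0])
    also have "\<dots> \<le> 1/2 * (\<Sum>i\<in>I. a i * x i) + b/4 * (\<Sum>i\<in>I. c i * x i)\<^sup>2 - 1/(2*(th+1)) * (\<Sum>i\<in>I. d i * x i powr (th+1))"
      using core_max[OF fin b th c0 dpos hC x y] by simp
    also have "\<dots> = E_b V b p k r (scU t u) (scG t G)"
      unfolding Eform[OF t0] ex[of "\<lambda>i z. a i * z"] ex[of "\<lambda>i z. c i * z"] ex[of "\<lambda>i z. d i * z powr (th+1)"] ..
    finally show "E_b V b p k r (scU s u) (scG s G) \<le> E_b V b p k r (scU t u) (scG t G)" .
  qed
qed


end
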